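(* Let $F=\{\mathbf{p}_0,\ldots,\mathbf{p}_n\}\subset\mathbb{R}^d$ be not contained in any $(d-1)$-dimensional affine subspace, let $\mathcal{D}=\{0,\ldots,n\}$, let $\lambda_i\in(0,1)$ for $i\in\mathcal{D}$, and let $S_i(\mathbf{x})=\lambda_i\mathbf{x}+(1-\lambda_i)\mathbf{p}_i$. Suppose $$\min_{A\subseteq\mathcal{D},\ \#A=d+1}\ \sum_{i\in A}\lambda_i\ \ge\ d.$$ Then the unique non-empty compact set $X$ with $X=\bigcup_{i\in\mathcal{D}}S_i(X)$ equals $\mathrm{conv}(F)$.
   Context: $\mathrm{conv}(F)$ denotes the convex hull of $F$. *)

theory Defs
  imports "HOL-Analysis.Analysis"
begin

end

theory Submission
  imports Defs
begin

lemma fix_subset: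
  fixes X Y :: "'a::euclidean_space set" and S :: "nat \<Rightarrow> 'a \<Rightarrow> 'a"
  assumes X: "compact X" "X \<noteq> {}" "X = (\<Union>i\<in>I. S i ` X)"
    and Y: "compact Y" "Y \<noteq> {}" "\<And>i y. i \<in> I \<Longrightarrow> y \<in> Y \<Longrightarrow> S i y \<in> Y"
    and c: "\<And>i x y. i \<in> I \<Longrightarrow> dist (S i x) (S i y) = lam i * dist x y"
    and l: "\<And>i. i \<in> I \<Longrightarrow> 0 < lam i \<and> lam i < 1"
  shows "X \<subseteq> Y"
proof -
  have "continuous_on X (\<lambda>x. infdist x Y)"
    by (intro continuous_intros)
  then have "compact ((\<lambda>x. infdist x Y) ` X)"
    by (rule compact_continuous_image) (rule X(1))
  moreover have "(\<lambda>x. infdist x Y) ` X \<noteq> {}" using X(2) by simp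
  ultimately obtain v where v: "v \<in> (\<lambda>x. infdist x Y) ` X" "\<And>w. w \<in> (\<lambda>x. infdist x Y) ` X \<Longrightarrow> w \<le> v"
    using compact_attains_sup by metis
  then obtain x0 where x0: "x0 \<in> X" and vx: "v = infdist x0 Y" by blast
  have mx: "\<And>x. x \<in> X \<Longrightarrow> infdist x Y \<le> infdist x0 Y"
    using v(2) vx by blast
  obtain i y where i: "i \<in> I" and y: "y \<in> X" and xy: "x0 = S i y"
    using x0 X(3) by blast
  obtain k where k: "k \<in> Y" and yk: "infdist y Y = dist y k"
    using infdist_attains_inf[of Y y] Y compact_imp_closed by blast
  have "infdist x0 Y \<le> dist x0 (S i k)"
    using infdist_le Y(3)[OF i k] by blast
  also have "\<dots> = lam i * infdist y Y" using c[OF i] xy yk by simp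
  also have "\<dots> \<le> lam i * infdist x0 Y" using mx[OF y] l[OF i] by (simp add: mult_left_mono)
  finally have le: "infdist x0 Y \<le> lam i * infdist x0 Y" .
  have "(1 - lam i) * infdist x0 Y \<le> 0" using le by (simp add: algebra_simps)
  moreover have "0 < 1 - lam i" using l[OF i] by simp
  ultimately have "infdist x0 Y \<le> 0" by (simp add: mult_le_0_iff)
  then have "infdist x0 Y = 0" using infdist_nonneg[of x0 Y] by linarith
  then have "\<And>x. x \<in> X \<Longrightarrow> infdist x Y = 0"
  proof -
    fix x assume "x \<in> X"
    from mx[OF this] have "infdist x Y \<le> 0" using \<open>infdist x0 Y = 0\<close> by simp
    then show "infdist x Y = 0" using infdist_nonneg[of x Y] by linarith
  qed
  moreover have "closed Y" using Y(1) by (rule compact_imp_closed)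
  ultimately show ?thesis
    using in_closed_iff_infdist_zero[OF \<open>closed Y\<close> Y(2)] by auto
qed

theorem lemma2p4:
  fixes p :: "nat \<Rightarrow> real ^ 'd" and lam :: "nat \<Rightarrow> real" and n :: nat
  defines "F \<equiv> p ` {0..n}"
  defines "S \<equiv> (\<lambda>i x. lam i *\<^sub>R x + (1 - lam i) *\<^sub>R p i)"
  assumes distinct: "inj_on p {0..n}"
    and spanning: "\<not> (\<exists>A :: (real ^ 'd) set. affine A \<and> aff_dim A = int CARD('d) - 1 \<and> F \<subseteq> A)"
    and lam_range: "\<forall>i\<in>{0..n}. 0 < lam i \<and> lam i < 1"
    and min_cond: "\<forall>A \<subseteq> {0..n}. card A = CARD('d) + 1 \<longrightarrow> (\<Sum>i\<in>A. lam i) \<ge> real CARD('d)"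
  shows "convex hull F = (\<Union>i\<in>{0..n}. S i ` (convex hull F))
    \<and> (\<forall>X. X \<noteq> {} \<and> compact X \<and> X = (\<Union>i\<in>{0..n}. S i ` X) \<longrightarrow> X = convex hull F)"
proof -
  have lr: "\<And>i. i \<in> {0..n} \<Longrightarrow> 0 < lam i \<and> lam i < 1" by (rule lam_range[rule_format])
  have finF: "finite F" unfolding F_def by simp
  have cardF: "card F = n + 1" unfolding F_def using card_image[OF distinct] by simp
  have nd: "CARD('d) \<le> n"
  proof (rule ccontr)
    assume "\<not> CARD('d) \<le> n"
    then have "aff_dim F < int CARD('d)"
      using aff_dim_le_card[OF finF] cardF by simp
    then have "aff_dim (convex hull F) < int CARD('d)"
      by (simp add: aff_dim_convex_hull)
    then have "interior (convex hull F) = {}"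
      using aff_dim_nonempty_interior[of "convex hull F"] by auto
    then obtain a b where ab: "a \<noteq> 0" "convex hull F \<subseteq> {x. a \<bullet> x = b}"
      using empty_interior_subset_hyperplane[OF convex_convex_hull] by blast
    have "affine {x. a \<bullet> x = b}" by (rule affine_hyperplane)
    moreover have "aff_dim {x. a \<bullet> x = b} = int CARD('d) - 1"
      using aff_dim_hyperplane[OF ab(1), of b] by simp
    moreover have "F \<subseteq> {x. a \<bullet> x = b}" using hull_subset[of F convex] ab(2) by (rule subset_trans)
    ultimately have "affine {x. a \<bullet> x = b} \<and> aff_dim {x. a \<bullet> x = b} = int CARD('d) - 1 \<and> F \<subseteq> {x. a \<bullet> x = b}"
      by simp
    then have "\<exists>A :: (real ^ 'd) set. affine A \<and> aff_dim A = int CARD('d) - 1 \<and> F \<subseteq> A"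
      by (rule exI)
    with spanning show False by (rule notE)
  qed
  have Sin: "S i y \<in> convex hull F" if "i \<in> {0..n}" "y \<in> convex hull F" for i y
  proof -
    have "p i \<in> convex hull F" using that(1) unfolding F_def by (simp add: hull_inc)
    moreover have "0 \<le> lam i" "lam i \<le> 1" using lr[OF that(1)] by auto
    ultimately show ?thesis unfolding S_def
      using convexD[OF convex_convex_hull, of y F "p i" "lam i" "1 - lam i"] that(2) by simp
  qed
  have cover: "convex hull F \<subseteq> (\<Union>i\<in>{0..n}. S i ` (convex hull F))"
  proof
    fix x assume x: "x \<in> convex hull F"
    obtain s where s: "finite s" "s \<subseteq> F" "card s \<le> CARD('d) + 1" "x \<in> convex hull s"
      using x caratheodory[of F] by auto
    obtain t where t: "s \<subseteq> t" "t \<subseteq> F" "card t = CARD('d) + 1"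
      using exists_subset_between[of s "CARD('d) + 1" F] s cardF nd finF by auto
    define A where "A = {i\<in>{0..n}. p i \<in> t}"
    have tA: "t = p ` A" using t(2) unfolding A_def F_def by auto
    have injA: "inj_on p A" using distinct unfolding A_def by (rule inj_on_subset) auto
    have Asub: "A \<subseteq> {0..n}" unfolding A_def by auto
    have finA: "finite A" unfolding A_def by simp
    have cardA: "card A = CARD('d) + 1" using t(3) tA card_image[OF injA] by simp
    have finT: "finite t" using t(2) finF finite_subset by blast
    have "x \<in> convex hull t" using s(4) t(1) hull_mono by blast
    then obtain u where u: "\<forall>y\<in>t. 0 \<le> u y" "sum u t = 1" "(\<Sum>y\<in>t. u y *\<^sub>R y) = x"
      using convex_hull_finite[OF finT] by auto
    define mu where "mu i = u (p i)" for i
    have mu0: "\<And>i. i \<in> A \<Longrightarrow> 0 \<le> mu i" using u(1) tA unfolding mu_def by auto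
    have mu1: "sum mu A = 1" using u(2) sum.reindex[OF injA, of u] tA unfolding mu_def by (simp add: comp_def)
    have xmu: "x = (\<Sum>i\<in>A. mu i *\<^sub>R p i)"
      using u(3) sum.reindex[OF injA, of "\<lambda>y. u y *\<^sub>R y"] tA unfolding mu_def by (simp add: comp_def)
    have lamA: "\<And>i. i \<in> A \<Longrightarrow> 0 < lam i \<and> lam i < 1" using lr Asub by blast
    obtain j where j: "j \<in> A" "mu j \<ge> 1 - lam j"
    proof (rule ccontr)
      assume "\<not> thesis"
      then have lt: "\<And>i. i \<in> A \<Longrightarrow> mu i < 1 - lam i" using that by force
      have "A \<noteq> {}" using cardA by auto
      then have "sum mu A < (\<Sum>i\<in>A. 1 - lam i)"
        using sum_strict_mono[OF finA \<open>A \<noteq> {}\<close>, of mu "\<lambda>i. 1 - lam i"] lt by blast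
      also have "\<dots> = real (CARD('d) + 1) - sum lam A"
        by (simp add: sum_subtractf cardA)
      also have "\<dots> \<le> 1" using min_cond Asub cardA by force
      finally show False using mu1 by simp
    qed
    have lj: "0 < lam j" "lam j < 1" using lamA[OF j(1)] by auto
    define nu where "nu i = (mu i - (if i = j then 1 - lam j else 0)) / lam j" for i
    define y where "y = (\<Sum>i\<in>A. nu i *\<^sub>R p i)"
    have nu0: "\<And>i. i \<in> A \<Longrightarrow> 0 \<le> nu i"
      unfolding nu_def using mu0 j lj by auto
    have "sum nu A = (sum mu A - (\<Sum>i\<in>A. if i = j then 1 - lam j else 0)) / lam j"
      unfolding nu_def sum_divide_distrib[symmetric] sum_subtractf[symmetric] by (rule refl)
    also have "\<dots> = 1" using mu1 j(1) finA lj by simp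
    finally have nu1: "sum nu A = 1" .
    have "y \<in> convex hull F" unfolding y_def
      by (rule convex_sum[OF finA convex_convex_hull nu1 nu0])
         (use Asub in \<open>auto simp: F_def hull_inc\<close>)
    moreover have "S j y = x"
    proof -
      have "lam j *\<^sub>R y = (\<Sum>i\<in>A. (mu i - (if i = j then 1 - lam j else 0)) *\<^sub>R p i)"
        unfolding y_def scaleR_sum_right nu_def using lj by (intro sum.cong) auto
      also have "\<dots> = (\<Sum>i\<in>A. mu i *\<^sub>R p i) - (\<Sum>i\<in>A. (if i = j then (1 - lam j) *\<^sub>R p i else 0))"
        unfolding sum_subtractf[symmetric]
        by (rule sum.cong) (auto simp: scaleR_left_diff_distrib)
      also have "\<dots> = x - (1 - lam j) *\<^sub>R p j" using j(1) finA xmu by simp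
      finally show ?thesis unfolding S_def by simp
    qed
    ultimately show "x \<in> (\<Union>i\<in>{0..n}. S i ` (convex hull F))" using j(1) Asub by blast
  qed
  have eq: "convex hull F = (\<Union>i\<in>{0..n}. S i ` (convex hull F))"
    using cover Sin by blast
  have cF: "compact (convex hull F)" "convex hull F \<noteq> {}"
    using finF compact_convex_hull finite_imp_compact apply blast
    unfolding F_def by simp
  have dS: "\<And>i x y. i \<in> {0..n} \<Longrightarrow> dist (S i x) (S i y) = lam i * dist x y"
  proof -
    fix i x y assume i: "i \<in> {0..n}"
    have "S i x - S i y = lam i *\<^sub>R (x - y)" unfolding S_def by (simp add: algebra_simps)
    then show "dist (S i x) (S i y) = lam i * dist x y"
      using lr[OF i] by (simp add: dist_norm)
  qed
  show ?thesis
  proof (intro conjI allI impI)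
    show "convex hull F = (\<Union>i\<in>{0..n}. S i ` (convex hull F))" by (rule eq)
  next
    fix X assume X: "X \<noteq> {} \<and> compact X \<and> X = (\<Union>i\<in>{0..n}. S i ` X)"
    have XS: "\<And>i y. i \<in> {0..n} \<Longrightarrow> y \<in> X \<Longrightarrow> S i y \<in> X" using X by blast
    have "X \<subseteq> convex hull F"
      by (rule fix_subset[where X=X and I="{0..n}" and S=S and Y="convex hull F" and lam=lam]) (use X cF Sin dS lr in auto)
    moreover have "convex hull F \<subseteq> X"
      by (rule fix_subset[where X="convex hull F" and I="{0..n}" and S=S and Y=X and lam=lam]) (use X cF eq XS dS lr in auto)
    ultimately show "X = convex hull F" by blast
  qed
qed

end
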